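(* Assume the standing assumptions (A1)–(A4) below. Let $r>0$ be a constant such that $\|u\|^2+\|w\|^2\le r$ for every $u\in\mathcal U$ and every extreme point $w$ of $\mathcal W$. Then for every $x\in\mathcal X$ the optimal value of \[ \min_{\lambda\in\mathbb R,\ \Lambda\in\mathbb R^{(k+m)\times n_2},\ \rho\in\mathbb R}\ \lambda+r\rho\quad\text{s.t.}\quad \lambda g_1g_1^T-\tfrac12 G(x)+\tfrac12(E^T\Lambda^T+\Lambda E)+\rho I\in \mathrm{COP}(\widehat{\mathcal U}\times\mathbb R^m_+),\ \ \rho\ge 0 \] equals $\pi(x)$.
   Context: Data: $A\in\mathbb R^{m\times n_1}$, $B\in\mathbb R^{m\times n_2}$, $c\in\mathbb R^{n_1}$, $d\in\mathbb R^{n_2}$, $F\in\mathbb R^{m\times k}$, $\mathcal X\subseteq\mathbb R^{n_1}$ closed convex. $\widehat{\mathcal U}\subseteq\mathbb R_+\times\mathbb R^{k-1}$ is a closed, convex, full-dimensional cone and $\mathcal U:=\{u\in\widehat{\mathcal U}: u_1=1\}$, assumed nonempty and compact. $e_1\in\mathbb R^k$ is the first standard basis vector, $g_1:=(e_1;0)\in\mathbb R^{k+m}$. The two-stage problem (RLP) is: $v^*_{RLP}:=\inf\{c^Tx+\sup_{u\in\mathcal U}d^Ty(u)\}$ over $x\in\mathcal X$ and maps $y:\mathcal U\to\mathbb R^{n_2}$ with $Ax+By(u)\ge Fu$ for all $u\in\mathcal U$. Standing assumptions: (A1) $\mathcal X$ and $\widehat{\mathcal U}$ are computationally tractable; (A2)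 (RLP) is feasible; (A3) $v^*_{RLP}$ is finite; (A4) relatively complete recourse: for all $x\in\mathcal X$, $u\in\mathcal U$ there is $y\in\mathbb R^{n_2}$ with $By\ge Fu-Ax$. Define $\mathcal W:=\{w\in\mathbb R^m: w\ge0,\ B^Tw=d\}$, $\pi(x):=\max_{u\in\mathcal U}\min_{y\in\mathbb R^{n_2}}\{d^Ty: By\ge Fu-Ax\}$, $E:=\begin{pmatrix}-de_1^T & B^T\end{pmatrix}\in\mathbb R^{n_2\times(k+m)}$, and $G(x):=\begin{pmatrix}0&(F-Axe_1^T)^T\\ F-Axe_1^T&0\end{pmatrix}\in\mathcal S^{k+m}$. For a closed convex cone $\mathcal K\subseteq\mathbb R^n$, $\mathrm{COP}(\mathcal K):=\{M\in\mathcal S^n: z^TMz\ge0\ \forall z\in\mathcal K\}$ and $\mathrm{CPP}(\mathcal K):=\{\sum_i z^i(z^i)^T: z^i\in\mathcal K\}$ (finite sums). *)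

theory Defs
  imports "HOL-Analysis.Analysis"
begin

text \<open>Vectors live in real^'n for finite index types; the (k+m)-dimensional
  space is real^('k::finite + 'm::finite), with Inl indexing the first k coordinates and Inr
  the last m.  The index i1 :: 'k plays the role of the first coordinate.\<close>

definition e1vec :: "'k \<Rightarrow> real^'k" where
  "e1vec i1 = (\<chi> i. if i = i1 then 1 else 0)"

definition COP :: "(real^'n) set \<Rightarrow> (real^'n^'n) set" where
  "COP K = {M. transpose M = M \<and> (\<forall>z\<in>K. 0 \<le> z \<bullet> (M *v z))}"

definition cone_prod :: "(real^'k) set \<Rightarrow> (real^('k::finite + 'm::finite)) set" where
  "cone_prod Uh = {z. (\<chi> i. z $ Inl i) \<in> Uh \<and> (\<forall>j. 0 \<le> z $ Inr j)}"

definition Uset :: "'k \<Rightarrow> (real^'k) set \<Rightarrow> (real^'k) set" where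
  "Uset i1 Uh = {u \<in> Uh. u $ i1 = 1}"

definition Wset :: "real^'n2^'m \<Rightarrow> real^'n2 \<Rightarrow> (real^'m) set" where
  "Wset B d = {w. (\<forall>j. 0 \<le> w $ j) \<and> transpose B *v w = d}"

definition pi_val :: "real^'n1^'m \<Rightarrow> real^'n2^'m \<Rightarrow> real^'n2 \<Rightarrow> real^'k^'m
    \<Rightarrow> (real^'k) set \<Rightarrow> real^'n1 \<Rightarrow> ereal" where
  "pi_val A B d F U x =
     (SUP u\<in>U. INF y\<in>{y. \<forall>j. (F *v u - A *v x) $ j \<le> (B *v y) $ j}. ereal (d \<bullet> y))"

text \<open>E = ( -d e1^T , B^T ) in R^(n2 x (k+m)).\<close>
definition Emat :: "'k \<Rightarrow> real^'n2^'m \<Rightarrow> real^'n2 \<Rightarrow> real^('k::finite + 'm::finite)^'n2" where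
  "Emat i1 B d = (\<chi> p q. case q of Inl i \<Rightarrow> - (d $ p) * (e1vec i1 $ i)
                                   | Inr j \<Rightarrow> B $ j $ p)"

text \<open>G(x) = [[0, (F - A x e1^T)^T], [F - A x e1^T, 0]].\<close>
definition Gmat :: "'k \<Rightarrow> real^'n1^'m \<Rightarrow> real^'k^'m \<Rightarrow> real^'n1
    \<Rightarrow> real^('k::finite + 'm::finite)^('k + 'm)" where
  "Gmat i1 A F x = (let H = (\<chi> j i. F $ j $ i - (A *v x) $ j * (e1vec i1 $ i)) in
     (\<chi> p q. case p of
        Inl i \<Rightarrow> (case q of Inl i' \<Rightarrow> 0 | Inr j \<Rightarrow> H $ j $ i)
      | Inr j \<Rightarrow> (case q of Inl i \<Rightarrow> H $ j $ i | Inr j' \<Rightarrow> 0)))"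

definition g1vec :: "'k \<Rightarrow> real^('k::finite + 'm::finite)" where
  "g1vec i1 = (\<chi> p. case p of Inl i \<Rightarrow> e1vec i1 $ i | Inr j \<Rightarrow> 0)"

definition outer :: "real^'n \<Rightarrow> real^'n \<Rightarrow> real^'n^'n" where
  "outer a b = (\<chi> i j. a $ i * b $ j)"

definition cop_feasible :: "'k \<Rightarrow> (real^'k) set \<Rightarrow> real^'n1^'m \<Rightarrow> real^'n2^'m
    \<Rightarrow> real^'n2 \<Rightarrow> real^'k^'m \<Rightarrow> real^'n1
    \<Rightarrow> (real \<times> (real^'n2^('k + 'm)) \<times> real) set" where
  "cop_feasible i1 Uh A B d F x =
     {(lam, Lam, rho). rho \<ge> 0 \<and>
        lam *\<^sub>R outer (g1vec i1) (g1vec i1) - (1/2) *\<^sub>R Gmat i1 A F x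
        + (1/2) *\<^sub>R (transpose (Emat i1 B d) ** transpose Lam + Lam ** Emat i1 B d)
        + rho *\<^sub>R mat 1 \<in> COP (cone_prod Uh :: (real^('k::finite + 'm::finite)) set)}"

definition cop_value :: "'k \<Rightarrow> (real^'k) set \<Rightarrow> real^'n1^'m \<Rightarrow> real^'n2^'m
    \<Rightarrow> real^'n2 \<Rightarrow> real^'k^'m \<Rightarrow> real \<Rightarrow> real^'n1 \<Rightarrow> ereal" where
  "cop_value i1 Uh A B d F r x =
     (INF (lam, Lam, rho)\<in>cop_feasible i1 Uh A B d F x. ereal (lam + r * rho))"

definition rlp_feasible :: "(real^'n1) set \<Rightarrow> (real^'k) set \<Rightarrow> real^'n1^'m
    \<Rightarrow> real^'n2^'m \<Rightarrow> real^'k^'m \<Rightarrow> ((real^'n1) \<times> (real^'k \<Rightarrow> real^'n2)) set" where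
  "rlp_feasible X U A B F =
     {(x, y). x \<in> X \<and> (\<forall>u\<in>U. \<forall>j. (F *v u) $ j \<le> (A *v x + B *v y u) $ j)}"

definition rlp_value :: "(real^'n1) set \<Rightarrow> (real^'k) set \<Rightarrow> real^'n1^'m
    \<Rightarrow> real^'n2^'m \<Rightarrow> real^'n1 \<Rightarrow> real^'n2 \<Rightarrow> real^'k^'m \<Rightarrow> ereal" where
  "rlp_value X U A B c d F =
     (INF (x, y)\<in>rlp_feasible X U A B F. ereal (c \<bullet> x) + (SUP u\<in>U. ereal (d \<bullet> y u)))"

end

theory Submission
  imports Defs
begin


lemma sum_UNIV_sum:
  "(\<Sum>p\<in>(UNIV::('a::finite+'b::finite) set). f p) = (\<Sum>i\<in>UNIV. f (Inl i)) + (\<Sum>j\<in>UNIV. f (Inr j))"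
proof -
  have "sum f (UNIV::('a+'b) set) = sum f ((UNIV::'a set) <+> (UNIV::'b set))" by simp
  also have "\<dots> = sum (f \<circ> Inl) (UNIV::'a set) + sum (f \<circ> Inr) (UNIV::'b set)"
    by (rule sum.Plus) auto
  finally show ?thesis by (simp add: comp_def)
qed

definition uo :: "real^('k::finite+'m::finite) \<Rightarrow> real^'k" where "uo z = (\<chi> i. z $ Inl i)"
definition wo :: "real^('k::finite+'m::finite) \<Rightarrow> real^'m" where "wo z = (\<chi> j. z $ Inr j)"
definition Hm :: "'k \<Rightarrow> real^'n1^'m \<Rightarrow> real^'k^'m \<Rightarrow> real^'n1 \<Rightarrow> real^'k^'m" where
  "Hm i1 A F x = (\<chi> j i. F $ j $ i - (A *v x) $ j * (e1vec i1 $ i))"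

lemma inner_split: "(z::real^('k::finite+'m::finite)) \<bullet> y = uo z \<bullet> uo y + wo z \<bullet> wo y"
  by (simp add: inner_vec_def sum_UNIV_sum uo_def wo_def)

lemma e1_sum: "(\<Sum>i\<in>UNIV. e1vec i1 $ i * f i) = f i1" "(\<Sum>i\<in>UNIV. f i * e1vec i1 $ i) = f i1"
proof -
  have "\<And>i. e1vec i1 $ i * f i = (if i = i1 then f i else 0)" "\<And>i. f i * e1vec i1 $ i = (if i = i1 then f i else 0)"
    by (simp_all add: e1vec_def)
  then show "(\<Sum>i\<in>UNIV. e1vec i1 $ i * f i) = f i1" "(\<Sum>i\<in>UNIV. f i * e1vec i1 $ i) = f i1"
    by (simp_all add: sum.delta)
qed

lemma g1_inner: "g1vec i1 \<bullet> (z::real^('k::finite+'m::finite)) = z $ Inl i1"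
  by (simp add: inner_vec_def sum_UNIV_sum g1vec_def e1_sum)

lemma outer_mv: "outer a b *v z = (b \<bullet> z) *\<^sub>R a"
  by (simp add: vec_eq_iff outer_def matrix_vector_mult_def inner_vec_def sum_distrib_left algebra_simps)

lemma Hm_mv: "Hm i1 A F x *v u = F *v u - (u $ i1) *\<^sub>R (A *v x)"
proof -
  have "\<And>j. (\<Sum>i\<in>UNIV. (F $ j $ i - (A *v x) $ j * e1vec i1 $ i) * u $ i)
     = (\<Sum>i\<in>UNIV. F $ j $ i * u $ i) - (A *v x) $ j * (\<Sum>i\<in>UNIV. e1vec i1 $ i * u $ i)"
    by (simp add: algebra_simps sum_subtractf sum_distrib_left)
  then show ?thesis
    by (simp add: vec_eq_iff Hm_def matrix_vector_mult_def e1_sum mult.commute)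
qed

lemma E_mv: "Emat i1 B d *v z = transpose B *v wo z - (z $ Inl i1) *\<^sub>R d"
proof -
  have "(\<Sum>i\<in>UNIV. - (d $ p * (e1vec i1 $ i * z $ Inl i))) = - (d $ p * z $ Inl i1)" for p
    using e1_sum(1)[of i1 "\<lambda>i. - (d $ p) * z $ Inl i"] by (simp add: mult_ac)
  then show ?thesis
    by (simp add: vec_eq_iff Emat_def matrix_vector_mult_def sum_UNIV_sum wo_def transpose_def mult_ac)
qed

lemma G_quad: "z \<bullet> (Gmat i1 A F x *v z) = 2 * (wo z \<bullet> (Hm i1 A F x *v uo z))"
proof -
  have "z \<bullet> (Gmat i1 A F x *v z) = (\<Sum>i\<in>UNIV. z $ Inl i * (\<Sum>j\<in>UNIV. Hm i1 A F x $ j $ i * z $ Inr j))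
     + (\<Sum>j\<in>UNIV. z $ Inr j * (\<Sum>i\<in>UNIV. Hm i1 A F x $ j $ i * z $ Inl i))"
    by (simp add: Gmat_def Let_def inner_vec_def matrix_vector_mult_def sum_UNIV_sum Hm_def)
  also have "(\<Sum>i\<in>UNIV. z $ Inl i * (\<Sum>j\<in>UNIV. Hm i1 A F x $ j $ i * z $ Inr j))
      = (\<Sum>i\<in>UNIV. \<Sum>j\<in>UNIV. z $ Inl i * (Hm i1 A F x $ j $ i * z $ Inr j))"
    by (simp add: sum_distrib_left)
  also have "\<dots> = (\<Sum>j\<in>UNIV. \<Sum>i\<in>UNIV. z $ Inl i * (Hm i1 A F x $ j $ i * z $ Inr j))"
    by (rule sum.swap)
  also have "\<dots> = (\<Sum>j\<in>UNIV. z $ Inr j * (\<Sum>i\<in>UNIV. Hm i1 A F x $ j $ i * z $ Inl i))"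
    by (simp add: sum_distrib_left mult_ac)
  also have "(\<Sum>j\<in>UNIV. z $ Inr j * (\<Sum>i\<in>UNIV. Hm i1 A F x $ j $ i * z $ Inl i))
     = wo z \<bullet> (Hm i1 A F x *v uo z)"
    by (simp add: inner_vec_def matrix_vector_mult_def wo_def uo_def mult_ac)
  finally show ?thesis by simp
qed

definition Mm where
  "Mm i1 A B d F x lam Lam rho =
     lam *\<^sub>R outer (g1vec i1) (g1vec i1) - (1/2) *\<^sub>R Gmat i1 A F x
        + (1/2) *\<^sub>R (transpose (Emat i1 B d) ** transpose Lam + Lam ** Emat i1 B d)
        + rho *\<^sub>R mat 1"

lemma quad_lemma1: "(z::real^'n) \<bullet> ((transpose (E::real^'n^'p) ** transpose (L::real^'p^'n)) *v z)
    = (transpose L *v z) \<bullet> (E *v z)"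
proof -
  have "z \<bullet> ((transpose E ** transpose L) *v z) = z \<bullet> ((transpose L *v z) v* E)"
    by (simp flip: matrix_vector_mul_assoc)
  also have "\<dots> = (transpose L *v z) \<bullet> (E *v z)"
    by (simp only: inner_commute[of z] dot_lmul_matrix)
  finally show ?thesis .
qed

lemma quad_lemma2: "(z::real^'n) \<bullet> ((L ** (E::real^'n^'p)) *v z) = (transpose L *v z) \<bullet> (E *v z)"
proof -
  have "z \<bullet> ((L ** E) *v z) = z \<bullet> (L *v (E *v z))"
    by (simp flip: matrix_vector_mul_assoc)
  also have "\<dots> = (z v* L) \<bullet> (E *v z)"
    by (simp only: dot_lmul_matrix)
  finally show ?thesis by simp
qed

lemma quad_form:
  "z \<bullet> (Mm i1 A B d F x lam Lam rho *v z) =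
     lam * (z $ Inl i1)^2 - wo z \<bullet> (Hm i1 A F x *v uo z)
     + (transpose Lam *v z) \<bullet> (Emat i1 B d *v z) + rho * (z \<bullet> z)"
proof -
  have 1: "z \<bullet> (outer (g1vec i1) (g1vec i1) *v z) = (z $ Inl i1)^2"
    by (simp add: outer_mv g1_inner inner_commute[of z] power2_eq_square)
  have 2: "z \<bullet> ((transpose (Emat i1 B d) ** transpose Lam + Lam ** Emat i1 B d) *v z)
      = 2 * ((transpose Lam *v z) \<bullet> (Emat i1 B d *v z))"
    by (simp only: matrix_vector_mult_add_rdistrib inner_add_right quad_lemma1) (simp only: quad_lemma2 mult_2)
  define S where "S = transpose (Emat i1 B d) ** transpose Lam + Lam ** Emat i1 B d"
  have "Mm i1 A B d F x lam Lam rho *v z = lam *\<^sub>R (outer (g1vec i1) (g1vec i1) *v z)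
     - (1/2) *\<^sub>R (Gmat i1 A F x *v z) + (1/2) *\<^sub>R (S *v z) + rho *\<^sub>R z"
    unfolding Mm_def S_def[symmetric]
    by (simp only: matrix_vector_mult_add_rdistrib matrix_vector_mult_diff_rdistrib
        scaleR_matrix_vector_assoc[symmetric] matrix_vector_mul_lid)
  then show ?thesis
    by (simp add: inner_add_right inner_diff_right 1 2[folded S_def] G_quad)
qed



lemma sep_lemma:
  fixes K :: "'a::euclidean_space set" and e :: "'a \<Rightarrow> 'b::euclidean_space" and psi :: "'a \<Rightarrow> real"
  assumes cK: "compact K" and ce: "continuous_on K e" and cp: "continuous_on K psi"
    and key: "\<forall>q \<in> convex hull ((\<lambda>z. (e z, psi z)) ` K). fst q = 0 \<longrightarrow> snd q < 0"
  shows "\<exists>\<beta>. \<forall>z\<in>K. psi z \<le> \<beta> \<bullet> e z"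
proof (cases "K = {}")
  case True then show ?thesis by auto
next
  case False
  define P where "P = convex hull ((\<lambda>z. (e z, psi z)) ` K)"
  define T :: "('b \<times> real) set" where "T = {0} \<times> {0..}"
  have cimg: "compact ((\<lambda>z. (e z, psi z)) ` K)"
    by (rule compact_continuous_image) (auto intro: continuous_on_Pair ce cp cK)
  have cP: "compact P" unfolding P_def by (rule compact_convex_hull[OF cimg])
  have vP: "convex P" unfolding P_def by simp
  have nP: "P \<noteq> {}" using False unfolding P_def by simp
  have cT: "closed T" unfolding T_def by (intro closed_Times) auto
  have vT: "convex T" unfolding T_def by (intro convex_Times) auto
  have dPT: "P \<inter> T = {}"
  proof -
    { fix q assume "q \<in> P" "q \<in> T"
      then have "fst q = 0" "snd q \<ge> 0" unfolding T_def by auto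
      with key \<open>q \<in> P\<close> have False unfolding P_def by fastforce }
    then show ?thesis by blast
  qed
  obtain a c where aP: "\<forall>x\<in>P. a \<bullet> x < c" and aT: "\<forall>x\<in>T. a \<bullet> x > c"
    using separating_hyperplane_compact_closed[OF vP cP nP vT cT dPT] by blast
  define \<gamma> where "\<gamma> = fst a"
  define \<eta> where "\<eta> = snd a"
  have aeq: "a \<bullet> (p, t) = \<gamma> \<bullet> p + \<eta> * t" for p t
    unfolding \<gamma>_def \<eta>_def by (cases a) simp
  have c0: "c < 0" using aT[rule_format, of "(0,0)"] aeq[of 0 0] unfolding T_def by simp
  have eta0: "\<eta> \<ge> 0"
  proof (rule ccontr)
    assume "\<not> \<eta> \<ge> 0"
    then have "\<eta> < 0" by simp
    have "(0, c / \<eta>) \<in> T" unfolding T_def using c0 \<open>\<eta> < 0\<close> by (simp add: divide_nonpos_neg)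
    then have "a \<bullet> (0, c / \<eta>) > c" using aT by blast
    then show False using aeq[of 0 "c/\<eta>"] \<open>\<eta> < 0\<close> by simp
  qed
  have mem: "(e z, psi z) \<in> P" if "z \<in> K" for z
    unfolding P_def using that by (intro hull_inc) auto
  have ineq: "\<gamma> \<bullet> e z + \<eta> * psi z < c" if "z \<in> K" for z
    using aP mem[OF that] aeq by metis
  show ?thesis
  proof (cases "\<eta> > 0")
    case True
    show ?thesis
    proof (intro exI ballI)
      fix z assume "z \<in> K"
      have "\<eta> * psi z < - (\<gamma> \<bullet> e z)" using ineq[OF \<open>z \<in> K\<close>] c0 by linarith
      then have "psi z < - (\<gamma> \<bullet> e z) / \<eta>" using True by (simp add: field_simps)
      then show "psi z \<le> (- (1/\<eta>) *\<^sub>R \<gamma>) \<bullet> e z" by simp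
    qed
  next
    case False
    then have e0: "\<eta> = 0" using eta0 by simp
    obtain M where M: "\<forall>x\<in>(\<lambda>z. (e z, psi z)) ` K. norm x \<le> M"
      using compact_imp_bounded[OF cimg] bounded_iff by blast
    define M' where "M' = max M 0"
    show ?thesis
    proof (intro exI ballI)
      fix z assume "z \<in> K"
      have "psi z \<le> M" using M \<open>z \<in> K\<close> norm_snd_le[of "psi z" "e z"] by (force simp: real_norm_def)
      then have "psi z \<le> M'" unfolding M'_def by simp
      have g: "\<gamma> \<bullet> e z \<le> c" using ineq[OF \<open>z \<in> K\<close>] e0 by simp
      have "M' / c \<le> 0" unfolding M'_def using c0 by (simp add: divide_nonneg_neg)
      then have "M' / c * c \<le> M' / c * (\<gamma> \<bullet> e z)" using g by (intro mult_left_mono_neg) auto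
      moreover have "M' / c * c = M'" using c0 by simp
      ultimately show "psi z \<le> ((M' / c) *\<^sub>R \<gamma>) \<bullet> e z" using \<open>psi z \<le> M'\<close> by simp
    qed
  qed
qed



lemma mv_row: "(B *v y) $ j = B $ j \<bullet> (y::real^'n)" 
  by (simp add: matrix_vector_mul_component)

lemma tB_axis: "transpose (B::real^'n^'m) *v axis j 1 = B $ j"
  by (simp add: matrix_vector_mult_basis row_def vec_eq_iff)

lemma farkas_lp:
  fixes B :: "real^'n^'m" and b :: "real^'m" and d :: "real^'n" and v :: real
  assumes feas: "\<forall>j. b $ j \<le> (B *v y0) $ j"
    and hyp: "\<forall>y. (\<forall>j. b $ j \<le> (B *v y) $ j) \<longrightarrow> v < d \<bullet> y"
  shows "\<exists>w. (\<forall>j. 0 \<le> w $ j) \<and> transpose B *v w = d \<and> v < w \<bullet> b"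
proof -
  define S :: "((real^'n) \<times> real) set" where
    "S = range (\<lambda>j. (B $ j, b $ j)) \<union> {(-d, -v), (0, -1)}"
  define C :: "((real^'n) \<times> real) set" where
    "C = {p. \<exists>\<mu> t0 t1. (\<forall>j. 0 \<le> \<mu> $ j) \<and> 0 \<le> t0 \<and> 0 \<le> t1 \<and>
            p = (transpose B *v \<mu> - t0 *\<^sub>R d, \<mu> \<bullet> b - t0 * v - t1)}"
  have finS: "finite S" unfolding S_def by simp
  have ccC: "convex_cone C"
    unfolding convex_cone_iff
  proof (intro conjI ballI allI impI)
    show "0 \<in> C" unfolding C_def
      by (rule CollectI, rule exI[of _ 0], rule exI[of _ 0], rule exI[of _ 0]) (simp add: zero_prod_def)
  next
    fix p q assume "p \<in> C" "q \<in> C"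
    then obtain \<mu>1 s1 r1 \<mu>2 s2 r2 where
      h1: "(\<forall>j. 0 \<le> \<mu>1 $ j)" "0 \<le> s1" "0 \<le> r1" "p = (transpose B *v \<mu>1 - s1 *\<^sub>R d, \<mu>1 \<bullet> b - s1 * v - r1)"
      and h2: "(\<forall>j. 0 \<le> \<mu>2 $ j)" "0 \<le> s2" "0 \<le> r2" "q = (transpose B *v \<mu>2 - s2 *\<^sub>R d, \<mu>2 \<bullet> b - s2 * v - r2)"
      unfolding C_def by blast
    show "p + q \<in> C" unfolding C_def
      apply (rule CollectI, rule exI[of _ "\<mu>1 + \<mu>2"], rule exI[of _ "s1 + s2"], rule exI[of _ "r1 + r2"])
      using h1 h2 by (simp add: matrix_vector_right_distrib inner_add_left algebra_simps)
  next
    fix p and c :: real assume "p \<in> C" "0 \<le> c"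
    then obtain \<mu>1 s1 r1 where
      h1: "(\<forall>j. 0 \<le> \<mu>1 $ j)" "0 \<le> s1" "0 \<le> r1" "p = (transpose B *v \<mu>1 - s1 *\<^sub>R d, \<mu>1 \<bullet> b - s1 * v - r1)"
      unfolding C_def by blast
    show "c *\<^sub>R p \<in> C" unfolding C_def
      apply (rule CollectI, rule exI[of _ "c *\<^sub>R \<mu>1"], rule exI[of _ "c * s1"], rule exI[of _ "c * r1"])
      using h1 \<open>0 \<le> c\<close> by (simp add: matrix_vector_mult_scaleR algebra_simps)
  qed
  have SC: "S \<subseteq> C"
  proof
    fix p assume "p \<in> S"
    then consider j where "p = (B $ j, b $ j)" | "p = (-d, -v)" | "p = (0, -1)"
      unfolding S_def by blast
    then show "p \<in> C"
    proof cases
      case 1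
      have ax: "\<forall>i. 0 \<le> (axis j 1 :: real^'m) $ i" by (simp add: axis_def)
      show ?thesis unfolding C_def
        apply (intro CollectI exI[of _ "axis j 1"] exI[of _ 0])
        using ax 1 by (simp del: transpose_matrix_vector add: tB_axis inner_axis')
    next
      case 2 then show ?thesis unfolding C_def
        by (intro CollectI exI[of _ 0] exI[of _ 1]) simp
    next
      case 3 then show ?thesis unfolding C_def
        by (intro CollectI exI[of _ 0] exI[of _ 1]) (simp add: zero_prod_def)
    qed
  qed
  have HC: "convex_cone hull S \<subseteq> C"
    using SC ccC by (rule hull_minimal)
  show ?thesis
  proof (cases "(0, 1) \<in> convex_cone hull S")
    case True
    then have "(0,1) \<in> C" using HC by blast
    then obtain \<mu> t0 t1 where h: "\<forall>j. 0 \<le> \<mu> $ j" "0 \<le> t0" "0 \<le> t1"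
       "transpose B *v \<mu> - t0 *\<^sub>R d = 0" "\<mu> \<bullet> b - t0 * v - t1 = 1"
      unfolding C_def by auto
    show ?thesis
    proof (cases "t0 = 0")
      case True
      have "\<mu> \<bullet> b \<le> \<mu> \<bullet> (B *v y0)"
        unfolding inner_vec_def
        by (rule sum_mono) (use h(1) feas in \<open>auto intro: mult_left_mono\<close>)
      also have "\<dots> = (transpose B *v \<mu>) \<bullet> y0"
        by (simp add: dot_lmul_matrix)
      also have "\<dots> = 0" using h(4) True by simp
      finally show ?thesis using h(5) h(3) True by simp
    next
      case False
      then have t0p: "t0 > 0" using h(2) by simp
      show ?thesis
      proof (intro exI conjI allI)
        fix j show "0 \<le> ((1/t0) *\<^sub>R \<mu>) $ j" using h(1) t0p by simp
      next
        show "transpose B *v ((1/t0) *\<^sub>R \<mu>) = d"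
          using h(4) t0p by (simp add: matrix_vector_mult_scaleR)
      next
        have "\<mu> \<bullet> b = 1 + t1 + t0 * v" using h(5) by simp
        then have "((1/t0) *\<^sub>R \<mu>) \<bullet> b = (1 + t1) / t0 + v" using t0p by (simp add: field_simps)
        then show "v < ((1/t0) *\<^sub>R \<mu>) \<bullet> b" using t0p h(3) by simp
      qed
    qed
  next
    case False
    obtain a c where ac: "a \<bullet> (0,1) < c" "\<forall>x\<in>convex_cone hull S. a \<bullet> x > c"
      using separating_hyperplane_closed_point[OF convex_convex_cone_hull closed_convex_cone_hull[OF finS] False]
      by blast
    have c0: "c < 0" using ac(2) convex_cone_hull_contains_0 by force
    have nn: "a \<bullet> x \<ge> 0" if "x \<in> convex_cone hull S" for x
    proof (rule ccontr)
      assume "\<not> 0 \<le> a \<bullet> x"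
      then have neg: "a \<bullet> x < 0" by simp
      have "(c / (a \<bullet> x)) *\<^sub>R x \<in> convex_cone hull S"
        using that c0 neg by (intro convex_cone_hull_mul) (auto simp: divide_nonpos_neg)
      then have "a \<bullet> ((c / (a \<bullet> x)) *\<^sub>R x) > c" using ac(2) by blast
      then show False using neg by simp
    qed
    obtain y s where as: "a = (y, s)" by (cases a)
    have s0: "s < 0" using ac(1) c0 as by simp
    have g1: "y \<bullet> B $ j + s * b $ j \<ge> 0" for j
      using nn[OF hull_inc[of "(B $ j, b $ j)"]] as unfolding S_def by auto
    have g2: "- (y \<bullet> d) - s * v \<ge> 0"
      using nn[OF hull_inc[of "(-d, -v)"]] as unfolding S_def by auto
    define y' where "y' = (- 1 / s) *\<^sub>R y"
    have "\<forall>j. b $ j \<le> (B *v y') $ j"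
    proof
      fix j
      have "(B *v y') $ j = - (y \<bullet> B $ j) / s"
        by (simp add: mv_row y'_def inner_commute)
      moreover have "- (y \<bullet> B $ j) / s \<ge> b $ j"
        using g1[of j] s0 by (simp add: field_simps)
      ultimately show "b $ j \<le> (B *v y') $ j" by simp
    qed
    then have "v < d \<bullet> y'" using hyp by blast
    moreover have "d \<bullet> y' = - (y \<bullet> d) / s" by (simp add: y'_def inner_commute)
    moreover have "- (y \<bullet> d) / s \<le> v" using g2 s0 by (simp add: field_simps)
    ultimately show ?thesis by simp
  qed
qed



lemma extreme_exists:
  fixes B :: "real^'n^'m" and d :: "real^'n" and b :: "real^'m"
  assumes w0: "w0 \<in> Wset B d"
    and noray: "\<forall>h. (\<forall>j. 0 \<le> h $ j) \<and> transpose B *v h = 0 \<longrightarrow> h \<bullet> b \<le> 0"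
  shows "\<exists>w. w extreme_point_of (Wset B d) \<and> w0 \<bullet> b \<le> w \<bullet> b"
proof -
  define sp :: "real^'m \<Rightarrow> nat" where "sp w = card {j. w $ j \<noteq> 0}" for w
  obtain w where wC: "w \<in> Wset B d" "w0 \<bullet> b \<le> w \<bullet> b"
    and wmin: "\<forall>w'. w' \<in> Wset B d \<and> w0 \<bullet> b \<le> w' \<bullet> b \<longrightarrow> sp w \<le> sp w'"
    using ex_has_least_nat[of "\<lambda>w. w \<in> Wset B d \<and> w0 \<bullet> b \<le> w \<bullet> b" w0 sp] w0 by auto
  have wnn: "\<forall>j. 0 \<le> w $ j" and wB: "transpose B *v w = d" using wC(1) unfolding Wset_def by auto
  have "w extreme_point_of (Wset B d)"
    unfolding extreme_point_of_def
  proof (intro conjI ballI)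
    show "w \<in> Wset B d" by (rule wC(1))
    fix a c assume aW: "a \<in> Wset B d" and cW: "c \<in> Wset B d"
    show "w \<notin> open_segment a c"
    proof
      assume "w \<in> open_segment a c"
      then obtain t where ac: "a \<noteq> c" and t: "0 < t" "t < 1" and weq: "w = (1 - t) *\<^sub>R a + t *\<^sub>R c"
        unfolding in_segment by blast
      have ann: "\<forall>j. 0 \<le> a $ j" and aB: "transpose B *v a = d" using aW unfolding Wset_def by auto
      have cnn: "\<forall>j. 0 \<le> c $ j" and cB: "transpose B *v c = d" using cW unfolding Wset_def by auto
      define h where "h = c - a"
      have hz: "h $ j = 0" if "w $ j = 0" for j
      proof -
        have "(1 - t) * a $ j + t * c $ j = 0" using that weq by simp
        moreover have "0 \<le> (1 - t) * a $ j" "0 \<le> t * c $ j" using ann cnn t by auto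
        ultimately have "(1 - t) * a $ j = 0" "t * c $ j = 0" by linarith+
        then show ?thesis using t by (simp add: h_def)
      qed
      have hB: "transpose B *v h = 0"
        using aB cB unfolding h_def by (simp del: transpose_matrix_vector add: matrix_vector_mult_diff_distrib)
      have hne: "h \<noteq> 0" using ac unfolding h_def by simp
      have hBn: "transpose B *v (- h) = 0"
        using hB matrix_vector_mult_scaleR[of "transpose B" "-1" h]
        by (simp del: transpose_matrix_vector)
      obtain g where gB: "transpose B *v g = 0" and gb: "0 \<le> g \<bullet> b"
        and gz: "\<forall>j. w $ j = 0 \<longrightarrow> g $ j = 0" and gneg: "\<exists>j. g $ j < 0"
      proof -
        have disj: "((\<exists>j. h $ j < 0) \<and> 0 \<le> h \<bullet> b) \<or> ((\<exists>j. (- h) $ j < 0) \<and> 0 \<le> (- h) \<bullet> b)"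
        proof (rule ccontr)
          assume nc: "\<not> ?thesis"
          show False
          proof (cases "0 \<le> h \<bullet> b")
            case True
            then have "\<forall>j. 0 \<le> h $ j" using nc by (meson not_le)
            then have "h \<bullet> b \<le> 0" using noray hB by blast
            then have "0 \<le> (- h) \<bullet> b" by simp
            then have "\<forall>j. 0 \<le> (- h) $ j" using nc by (meson not_le)
            then have "\<forall>j. h $ j = 0" using \<open>\<forall>j. 0 \<le> h $ j\<close> by (metis neg_0_le_iff_le order_antisym vector_uminus_component)
            then show False using hne by (simp add: vec_eq_iff)
          next
            case False
            then have "0 \<le> (- h) \<bullet> b" by simp
            then have "\<forall>j. 0 \<le> (- h) $ j" using nc by (meson not_le)
            then have "(- h) \<bullet> b \<le> 0" using noray hBn by blast
            then show False using False by simp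
          qed
        qed
        then show thesis
        proof
          assume "(\<exists>j. h $ j < 0) \<and> 0 \<le> h \<bullet> b" then show ?thesis using that[of h] hB hz by blast
        next
          assume "(\<exists>j. (- h) $ j < 0) \<and> 0 \<le> (- h) \<bullet> b" then show ?thesis using that[of "- h"] hBn hz by simp
        qed
      qed
      define J where "J = {j. g $ j < 0}"
      have finJ: "finite J" and neJ: "J \<noteq> {}" using gneg unfolding J_def by auto
      define s where "s = Min ((\<lambda>j. w $ j / (- g $ j)) ` J)"
      have "s \<in> (\<lambda>j. w $ j / (- g $ j)) ` J"
        unfolding s_def using finJ neJ by (intro Min_in) auto
      then obtain js where js: "js \<in> J" "s = w $ js / (- g $ js)" by blast
      have sle: "s \<le> w $ j / (- g $ j)" if "j \<in> J" for j
        unfolding s_def using finJ that by (intro Min_le) auto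
      have s0: "0 \<le> s" using js wnn unfolding J_def by (simp add: divide_nonneg_neg)
      define w' where "w' = w + s *\<^sub>R g"
      have w'nn: "\<forall>j. 0 \<le> w' $ j"
      proof
        fix j
        show "0 \<le> w' $ j"
        proof (cases "j \<in> J")
          case True
          then have gj: "g $ j < 0" unfolding J_def by simp
          have "s * (- g $ j) \<le> w $ j" using sle[OF True] gj by (simp add: field_simps)
          then show ?thesis unfolding w'_def by simp
        next
          case False
          then have "0 \<le> g $ j" unfolding J_def by simp
          then show ?thesis unfolding w'_def using wnn s0 by simp
        qed
      qed
      have w'B: "transpose B *v w' = d"
        unfolding w'_def using wB gB
        by (simp del: transpose_matrix_vector add: matrix_vector_right_distrib matrix_vector_mult_scaleR)
      have w'b: "w0 \<bullet> b \<le> w' \<bullet> b"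
        unfolding w'_def using wC(2) mult_nonneg_nonneg[OF s0 gb] by (simp add: inner_add_left)
      have gjs: "g $ js < 0" using js unfolding J_def by simp
      have w'js: "w' $ js = 0" unfolding w'_def using js gjs by simp
      have wjs: "w $ js \<noteq> 0" using gz gjs by force
      have sub: "{j. w' $ j \<noteq> 0} \<subset> {j. w $ j \<noteq> 0}"
      proof
        show "{j. w' $ j \<noteq> 0} \<subseteq> {j. w $ j \<noteq> 0}"
          unfolding w'_def using gz by auto
        show "{j. w' $ j \<noteq> 0} \<noteq> {j. w $ j \<noteq> 0}" using w'js wjs by blast
      qed
      have "sp w' < sp w" unfolding sp_def by (rule psubset_card_mono[OF _ sub]) simp
      moreover have "sp w \<le> sp w'" using wmin w'nn w'B w'b unfolding Wset_def by blast
      ultimately show False by simp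
    qed
  qed
  then show ?thesis using wC(2) by blast
qed


definition zvec :: "real^'k \<Rightarrow> real^'m \<Rightarrow> real^('k::finite+'m::finite)" where
  "zvec u w = (\<chi> p. case p of Inl i \<Rightarrow> u $ i | Inr j \<Rightarrow> w $ j)"

lemma uo_zvec[simp]: "uo (zvec u w) = u" by (simp add: uo_def zvec_def vec_eq_iff)
lemma wo_zvec[simp]: "wo (zvec u w) = w" by (simp add: wo_def zvec_def vec_eq_iff)
lemma zvec_Inl[simp]: "zvec u w $ Inl i = u $ i" by (simp add: zvec_def)

lemma uo_Inl: "uo z $ i = z $ Inl i" by (simp add: uo_def)

lemma cone_prod_iff: "z \<in> cone_prod Uh \<longleftrightarrow> uo z \<in> Uh \<and> (\<forall>j. 0 \<le> wo z $ j)"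
  by (simp add: cone_prod_def uo_def wo_def)

lemma tr_add: "transpose ((P::real^'a^'a) + Q) = transpose P + transpose Q"
  by (simp add: transpose_def vec_eq_iff)
lemma tr_diff: "transpose ((P::real^'a^'a) - Q) = transpose P - transpose Q"
  by (simp add: transpose_def vec_eq_iff)

lemma Mm_sym: "transpose (Mm i1 A B d F x lam Lam rho) = Mm i1 A B d F x lam Lam rho"
proof -
  have o: "transpose (outer a a) = outer a a" for a :: "real^'q"
    by (simp add: transpose_def outer_def vec_eq_iff mult.commute)
  have g: "transpose (Gmat i1 A F x) = Gmat i1 A F x"
    by (simp add: transpose_def Gmat_def Let_def vec_eq_iff split: sum.split)
  show ?thesis
    unfolding Mm_def
    by (simp only: tr_add tr_diff transpose_scalar o g matrix_transpose_mul transpose_transpose transpose_mat add.commute)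
qed

definition mouter :: "real^'p \<Rightarrow> real^'q \<Rightarrow> real^'q^'p" where
  "mouter a z = (\<chi> p q. a $ p * z $ q)"

lemma inner_outer: "(\<beta>::real^'q^'p) \<bullet> mouter a z = a \<bullet> (\<beta> *v z)"
  by (simp add: inner_vec_def mouter_def matrix_vector_mult_def sum_distrib_left mult_ac)

lemma quad_scale: "(c *\<^sub>R z) \<bullet> ((M::real^'a^'a) *v (c *\<^sub>R z)) = c^2 * (z \<bullet> (M *v z))"
  by (simp add: matrix_vector_mult_scaleR power2_eq_square)

lemma weak_dual:
  fixes B :: "real^'n^'m"
  assumes "\<forall>j. 0 \<le> w $ j" "transpose B *v w = d" "\<forall>j. b $ j \<le> (B *v y) $ j"
  shows "w \<bullet> b \<le> d \<bullet> y"
proof -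
  have "w \<bullet> b \<le> w \<bullet> (B *v y)"
    unfolding inner_vec_def
    by (rule sum_mono) (use assms in \<open>auto intro: mult_left_mono\<close>)
  also have "\<dots> = (transpose B *v w) \<bullet> y"
    by (simp add: dot_lmul_matrix)
  finally show ?thesis using assms(2) by simp
qed

theorem proposition1:
  fixes A :: "real^'n1^'m" and B :: "real^'n2^'m" and c :: "real^'n1" and d :: "real^'n2"
    and F :: "real^'k^'m" and X :: "(real^'n1) set" and Uh :: "(real^'k) set"
    and i1 :: 'k and r :: real
  assumes X_closed: "closed X" and X_convex: "convex X"
    and Uh_closed: "closed Uh" and Uh_convex: "convex Uh" and Uh_cone: "cone Uh"
    and Uh_fulldim: "interior Uh \<noteq> {}"
    and Uh_nonneg: "\<forall>u\<in>Uh. 0 \<le> u $ i1"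
    and U_nonempty: "Uset i1 Uh \<noteq> {}" and U_compact: "compact (Uset i1 Uh)"
    and A2: "rlp_feasible X (Uset i1 Uh) A B F \<noteq> {}"
    and A3: "\<bar>rlp_value X (Uset i1 Uh) A B c d F\<bar> \<noteq> \<infinity>"
    and A4: "\<forall>x\<in>X. \<forall>u\<in>Uset i1 Uh. \<exists>y. \<forall>j. (F *v u - A *v x) $ j \<le> (B *v y) $ j"
    and r_pos: "r > 0"
    and r_bound: "\<forall>u\<in>Uset i1 Uh. \<forall>w. w extreme_point_of (Wset B d) \<longrightarrow>
                    (norm u)\<^sup>2 + (norm w)\<^sup>2 \<le> r"
  shows "\<forall>x\<in>X. cop_value i1 Uh A B d F r x = pi_val A B d F (Uset i1 Uh) x"
proof (intro ballI)
  fix x assume xX: "x \<in> X"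
  define U where "U = Uset i1 Uh"
  define K :: "(real^('k+'m)) set" where "K = cone_prod Uh"
  have feas_iff: "(lam, Lam, rho) \<in> cop_feasible i1 Uh A B d F x \<longleftrightarrow>
      rho \<ge> 0 \<and> transpose (Mm i1 A B d F x lam Lam rho) = Mm i1 A B d F x lam Lam rho
      \<and> (\<forall>z\<in>K. 0 \<le> z \<bullet> (Mm i1 A B d F x lam Lam rho *v z))" for lam Lam rho
    unfolding cop_feasible_def COP_def Mm_def K_def by auto
  have U_iff: "u \<in> U \<longleftrightarrow> u \<in> Uh \<and> u $ i1 = 1" for u unfolding U_def Uset_def by auto
  have Uh_zero: "u = 0" if uUh: "u \<in> Uh" and u0: "u $ i1 = 0" for u
  proof (rule ccontr)
    assume un: "u \<noteq> 0"
    obtain u0 where u0U: "u0 \<in> U" using U_nonempty unfolding U_def by blast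
    obtain M where M: "\<forall>y\<in>U. norm y \<le> M"
      using compact_imp_bounded[OF U_compact] bounded_iff unfolding U_def by blast
    have M0: "norm u0 \<le> M" using M u0U by blast
    define t where "t = (M + norm u0 + 1) / norm u"
    have t0: "t \<ge> 0" unfolding t_def using M0 norm_ge_zero[of u0] norm_ge_zero[of u] by (intro divide_nonneg_nonneg) linarith+
    have "t *\<^sub>R u \<in> Uh" using Uh_cone uUh t0 unfolding cone_def by blast
    moreover have "u0 \<in> Uh" using u0U U_iff by blast
    ultimately have "u0 + t *\<^sub>R u \<in> Uh" using Uh_convex Uh_cone convex_cone by blast
    moreover have "(u0 + t *\<^sub>R u) $ i1 = 1" using u0U U_iff u0 by simp
    ultimately have "u0 + t *\<^sub>R u \<in> U" using U_iff by blast
    then have "norm (u0 + t *\<^sub>R u) \<le> M" using M by blast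
    moreover have "norm (t *\<^sub>R u) \<le> norm (u0 + t *\<^sub>R u) + norm u0"
      using norm_triangle_ineq4[of "u0 + t *\<^sub>R u" u0] by (simp add: algebra_simps)
    moreover have "norm (t *\<^sub>R u) = M + norm u0 + 1"
    proof -
      have "0 \<le> M + norm u0 + 1" using M0 norm_ge_zero[of u0] by linarith
      then show ?thesis using un unfolding t_def by simp
    qed
    ultimately show False by simp
  qed
  have Kscale: "c *\<^sub>R z \<in> K" if "z \<in> K" "c \<ge> 0" for z c
  proof -
    have "uo (c *\<^sub>R z) = c *\<^sub>R uo z" "wo (c *\<^sub>R z) = c *\<^sub>R wo z" by (simp_all add: uo_def wo_def vec_eq_iff)
    then show ?thesis using that Uh_cone unfolding K_def cone_prod_iff cone_def by auto
  qed
  have GE: "pi_val A B d F U x \<le> cop_value i1 Uh A B d F r x"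
    unfolding pi_val_def cop_value_def
  proof (rule SUP_least)
    fix u assume uU: "u \<in> U"
    have uUh: "u \<in> Uh" and u1: "u $ i1 = 1" using uU U_iff by auto
    define b where "b = F *v u - A *v x"
    show "(INF y\<in>{y. \<forall>j. (F *v u - A *v x) $ j \<le> (B *v y) $ j}. ereal (d \<bullet> y))
        \<le> (INF (lam, Lam, rho)\<in>cop_feasible i1 Uh A B d F x. ereal (lam + r * rho))"
    proof (rule INF_greatest)
      fix p assume pF: "p \<in> cop_feasible i1 Uh A B d F x"
      obtain lam Lam rho where p: "p = (lam, Lam, rho)" by (cases p)
      have fe: "rho \<ge> 0" "\<forall>z\<in>K. 0 \<le> z \<bullet> (Mm i1 A B d F x lam Lam rho *v z)"
        using pF feas_iff unfolding p by auto
      define v where "v = lam + r * rho"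
      have "(INF y\<in>{y. \<forall>j. b $ j \<le> (B *v y) $ j}. ereal (d \<bullet> y)) \<le> ereal v"
      proof (rule ccontr)
        assume "\<not> ?thesis"
        then have lt: "ereal v < (INF y\<in>{y. \<forall>j. b $ j \<le> (B *v y) $ j}. ereal (d \<bullet> y))" by simp
        have hyp: "\<forall>y. (\<forall>j. b $ j \<le> (B *v y) $ j) \<longrightarrow> v < d \<bullet> y"
        proof (intro allI impI)
          fix y assume "\<forall>j. b $ j \<le> (B *v y) $ j"
          then have "(INF y\<in>{y. \<forall>j. b $ j \<le> (B *v y) $ j}. ereal (d \<bullet> y)) \<le> ereal (d \<bullet> y)"
            by (intro INF_lower) simp
          with lt have "ereal v < ereal (d \<bullet> y)" by (rule less_le_trans)
          then show "v < d \<bullet> y" by simp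
        qed
        obtain y0 where y0: "\<forall>j. b $ j \<le> (B *v y0) $ j"
          using A4 xX uU unfolding U_def b_def by blast
        obtain w where wW: "\<forall>j. 0 \<le> w $ j" "transpose B *v w = d" and vw: "v < w \<bullet> b"
          using farkas_lp[OF y0 hyp] by blast
        have noray: "\<forall>h. (\<forall>j. 0 \<le> h $ j) \<and> transpose B *v h = 0 \<longrightarrow> h \<bullet> b \<le> 0"
          using weak_dual[OF _ _ y0] by fastforce
        obtain w' where w'e: "w' extreme_point_of (Wset B d)" and ww': "w \<bullet> b \<le> w' \<bullet> b"
          using extreme_exists[of w B d b] wW noray unfolding Wset_def by blast
        have w'W: "\<forall>j. 0 \<le> w' $ j" "transpose B *v w' = d"
          using w'e unfolding extreme_point_of_def Wset_def by auto
        have rb: "(norm u)\<^sup>2 + (norm w')\<^sup>2 \<le> r" using r_bound uU w'e unfolding U_def by blast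
        define z where "z = zvec u w'"
        have zK: "z \<in> K" unfolding K_def z_def cone_prod_iff using uUh w'W by simp
        have Ez: "Emat i1 B d *v z = 0" unfolding z_def E_mv using w'W u1 by simp
        have Hz: "Hm i1 A F x *v uo z = b" unfolding z_def Hm_mv b_def using u1 by simp
        have zz: "z \<bullet> z = (norm u)\<^sup>2 + (norm w')\<^sup>2"
          unfolding z_def inner_split[of "zvec u w'"] by (simp add: power2_norm_eq_inner)
        have "0 \<le> z \<bullet> (Mm i1 A B d F x lam Lam rho *v z)" using fe zK by blast
        also have "\<dots> = lam - w' \<bullet> b + rho * (z \<bullet> z)"
          unfolding quad_form Ez Hz using u1 by (simp add: z_def)
        also have "\<dots> \<le> lam - w' \<bullet> b + rho * r"
          using zz rb fe(1) by (simp add: mult_left_mono)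
        finally have "w' \<bullet> b \<le> v" unfolding v_def by (simp add: mult.commute)
        then show False using vw ww' by simp
      qed
      then show "(INF y\<in>{y. \<forall>j. (F *v u - A *v x) $ j \<le> (B *v y) $ j}. ereal (d \<bullet> y))
          \<le> (case p of (lam, Lam, rho) \<Rightarrow> ereal (lam + r * rho))"
        unfolding p v_def b_def by simp
    qed
  qed
  have main: "\<exists>lam Lam rho. (lam, Lam, rho) \<in> cop_feasible i1 Uh A B d F x \<and> lam + r * rho \<le> v + \<epsilon>"
    if piv: "pi_val A B d F U x \<le> ereal v" and ep: "0 < \<epsilon>" for v \<epsilon>
  proof -
    have pp: "wo z \<bullet> (Hm i1 A F x *v uo z) \<le> v * (z $ Inl i1)\<^sup>2"
      if zK: "z \<in> K" and Ez: "Emat i1 B d *v z = 0" for z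
    proof -
      define u where "u = uo z"
      define w where "w = wo z"
      define u1 where "u1 = z $ Inl i1"
      have uUh: "u \<in> Uh" and wnn: "\<forall>j. 0 \<le> w $ j"
        using zK unfolding K_def cone_prod_iff u_def w_def by auto
      have uu1: "u $ i1 = u1" unfolding u_def u1_def by (simp add: uo_Inl)
      have wB: "transpose B *v w = u1 *\<^sub>R d" using Ez unfolding E_mv w_def u1_def by simp
      have u10: "0 \<le> u1" using Uh_nonneg uUh uu1 by auto
      show ?thesis
      proof (cases "u1 = 0")
        case True
        then have "u = 0" using Uh_zero uUh uu1 by simp
        then show ?thesis using True unfolding u_def u1_def by simp
      next
        case False
        then have u1p: "u1 > 0" using u10 by simp
        define ut where "ut = (1/u1) *\<^sub>R u"
        define wt where "wt = (1/u1) *\<^sub>R w"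
        have utUh: "ut \<in> Uh" unfolding ut_def using Uh_cone uUh u1p unfolding cone_def by simp
        have ut1: "ut $ i1 = 1" unfolding ut_def using uu1 u1p by simp
        have utU: "ut \<in> U" using utUh ut1 U_iff by blast
        have wtnn: "\<forall>j. 0 \<le> wt $ j" unfolding wt_def using wnn u1p by simp
        have wtB: "transpose B *v wt = d"
          unfolding wt_def using wB u1p by (simp del: transpose_matrix_vector add: matrix_vector_mult_scaleR)
        define bt where "bt = F *v ut - A *v x"
        have "ereal (wt \<bullet> bt) \<le> (INF y\<in>{y. \<forall>j. (F *v ut - A *v x) $ j \<le> (B *v y) $ j}. ereal (d \<bullet> y))"
          by (rule INF_greatest) (use weak_dual[OF wtnn wtB] in \<open>auto simp: bt_def\<close>)
        also have "\<dots> \<le> pi_val A B d F U x"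
          unfolding pi_val_def by (rule SUP_upper[OF utU])
        also have "\<dots> \<le> ereal v" by (rule piv)
        finally have wtv: "wt \<bullet> bt \<le> v" by simp
        have ueq: "u = u1 *\<^sub>R ut" and weq: "w = u1 *\<^sub>R wt" unfolding ut_def wt_def using u1p by auto
        have "Hm i1 A F x *v ut = bt" unfolding Hm_mv bt_def ut1 by simp
        then have "wo z \<bullet> (Hm i1 A F x *v uo z) = u1 * u1 * (wt \<bullet> bt)"
          unfolding u_def[symmetric] w_def[symmetric] ueq weq by (simp add: matrix_vector_mult_scaleR)
        also have "\<dots> \<le> u1 * u1 * v" using wtv by (simp add: mult_left_mono)
        finally show ?thesis unfolding u1_def by (simp add: power2_eq_square mult.commute)
      qed
    qed
    define rho where "rho = \<epsilon> / r"
    have rho0: "rho > 0" unfolding rho_def using ep r_pos by simp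
    define Sph where "Sph = K \<inter> sphere 0 1"
    define e where "e z = mouter (Emat i1 B d *v z) z" for z
    define psi where "psi z = wo z \<bullet> (Hm i1 A F x *v uo z) - v * (z $ Inl i1)\<^sup>2 - rho" for z
    have closedK: "closed K"
    proof -
      have "K = (uo -` Uh \<inter> UNIV) \<inter> {z. \<forall>j. 0 \<le> z $ Inr j}"
        unfolding K_def by (auto simp: cone_prod_iff wo_def)
      moreover have "closed (uo -` Uh \<inter> UNIV)"
        using continuous_on_closed_vimage[of UNIV uo] Uh_closed
        unfolding uo_def by (auto intro!: continuous_intros)
      moreover have "closed {z::real^('k+'m). \<forall>j. 0 \<le> z $ Inr j}"
        by (intro closed_Collect_all closed_Collect_le continuous_intros)
      ultimately show ?thesis by auto
    qed
    have cS: "compact Sph" unfolding Sph_def by (intro closed_Int_compact closedK compact_sphere)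
    have ce: "continuous_on Sph e"
      unfolding e_def mouter_def matrix_vector_mult_def by (intro continuous_intros)
    have cp: "continuous_on Sph psi"
      unfolding psi_def inner_vec_def wo_def uo_def matrix_vector_mult_def by (intro continuous_intros)
    have gen: "fst p \<bullet> Emat i1 B d \<ge> 0 \<and> (fst p \<bullet> Emat i1 B d = 0 \<longrightarrow> snd p \<le> - rho)"
      if pS: "p \<in> (\<lambda>z. (e z, psi z)) ` Sph" for p
    proof -
      obtain z where zS: "z \<in> Sph" and p: "p = (e z, psi z)" using pS by blast
      have fe: "fst p \<bullet> Emat i1 B d = (Emat i1 B d *v z) \<bullet> (Emat i1 B d *v z)"
        unfolding p e_def by (simp add: inner_commute[of "mouter _ _"] inner_outer)
      have "snd p \<le> - rho" if "fst p \<bullet> Emat i1 B d = 0"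
      proof -
        have "Emat i1 B d *v z = 0" using that fe by simp
        then have "wo z \<bullet> (Hm i1 A F x *v uo z) \<le> v * (z $ Inl i1)\<^sup>2"
          using pp zS unfolding Sph_def by blast
        then show ?thesis unfolding p psi_def by simp
      qed
      then show ?thesis using fe by simp
    qed
    have key: "\<forall>q \<in> convex hull ((\<lambda>z. (e z, psi z)) ` Sph). fst q = 0 \<longrightarrow> snd q < 0"
    proof (intro ballI impI)
      fix q assume qH: "q \<in> convex hull ((\<lambda>z. (e z, psi z)) ` Sph)" and q0: "fst q = 0"
      obtain S0 \<mu> where S0: "finite S0" "S0 \<subseteq> (\<lambda>z. (e z, psi z)) ` Sph" "\<forall>p\<in>S0. 0 \<le> \<mu> p"
        "sum \<mu> S0 = 1" "(\<Sum>p\<in>S0. \<mu> p *\<^sub>R p) = q"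
        using qH unfolding convex_hull_explicit by blast
      have fq: "fst q = (\<Sum>p\<in>S0. \<mu> p *\<^sub>R fst p)" and sq: "snd q = (\<Sum>p\<in>S0. \<mu> p * snd p)"
        using S0(5) by (auto simp: fst_sum snd_sum)
      have "0 = fst q \<bullet> Emat i1 B d" using q0 by simp
      also have "\<dots> = (\<Sum>p\<in>S0. \<mu> p * (fst p \<bullet> Emat i1 B d))"
        unfolding fq by (simp add: inner_sum_left)
      finally have "0 = (\<Sum>p\<in>S0. \<mu> p * (fst p \<bullet> Emat i1 B d))" .
      moreover have nn: "\<forall>p\<in>S0. 0 \<le> \<mu> p * (fst p \<bullet> Emat i1 B d)"
      proof
        fix p assume pS: "p \<in> S0"
        then have "0 \<le> fst p \<bullet> Emat i1 B d" using gen S0(2) by blast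
        then show "0 \<le> \<mu> p * (fst p \<bullet> Emat i1 B d)" using S0(3) pS by simp
      qed
      ultimately have z0: "\<forall>p\<in>S0. \<mu> p * (fst p \<bullet> Emat i1 B d) = 0"
        using sum_nonneg_eq_0_iff[OF S0(1), of "\<lambda>p. \<mu> p * (fst p \<bullet> Emat i1 B d)"] by simp
      have "\<forall>p\<in>S0. \<mu> p * snd p \<le> \<mu> p * (- rho)"
      proof
        fix p assume pS: "p \<in> S0"
        show "\<mu> p * snd p \<le> \<mu> p * (- rho)"
        proof (cases "\<mu> p = 0")
          case True then show ?thesis by simp
        next
          case False
          then have "fst p \<bullet> Emat i1 B d = 0" using z0 pS by auto
          then have "snd p \<le> - rho" using gen S0(2) pS by blast
          moreover have "0 \<le> \<mu> p" using S0(3) pS by blast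
          ultimately show ?thesis by (rule mult_left_mono)
        qed
      qed
      then have "snd q \<le> (\<Sum>p\<in>S0. \<mu> p * (- rho))" unfolding sq by (intro sum_mono) blast
      also have "\<dots> = - rho" using S0(4) by (simp add: sum_negf sum_distrib_right[symmetric])
      finally show "snd q < 0" using rho0 by simp
    qed
    obtain \<beta> where \<beta>: "\<forall>z\<in>Sph. psi z \<le> \<beta> \<bullet> e z"
      using sep_lemma[OF cS ce cp key] by blast
    define Lam where "Lam = transpose \<beta>"
    have cop: "0 \<le> z \<bullet> (Mm i1 A B d F x v Lam rho *v z)" if zK: "z \<in> K" for z
    proof (cases "z = 0")
      case True then show ?thesis by simp
    next
      case False
      define z1 where "z1 = (1 / norm z) *\<^sub>R z"
      have z1K: "z1 \<in> K" unfolding z1_def using Kscale zK by simp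
      have nz1: "norm z1 = 1" unfolding z1_def using False by simp
      then have z1S: "z1 \<in> Sph" using z1K unfolding Sph_def by simp
      have z1z1: "z1 \<bullet> z1 = 1" using nz1 power2_norm_eq_inner[of z1] by simp
      have "0 \<le> z1 \<bullet> (Mm i1 A B d F x v Lam rho *v z1)"
      proof -
        have "psi z1 \<le> \<beta> \<bullet> e z1" using \<beta> z1S by blast
        also have "\<beta> \<bullet> e z1 = (transpose Lam *v z1) \<bullet> (Emat i1 B d *v z1)"
          unfolding e_def Lam_def by (simp add: inner_outer inner_commute)
        finally show ?thesis unfolding quad_form psi_def using z1z1 by simp
      qed
      moreover have "z = norm z *\<^sub>R z1" unfolding z1_def using False by simp
      ultimately have "z \<bullet> (Mm i1 A B d F x v Lam rho *v z) = (norm z)\<^sup>2 * (z1 \<bullet> (Mm i1 A B d F x v Lam rho *v z1))"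
        using quad_scale[of "norm z" z1 "Mm i1 A B d F x v Lam rho"] by simp
      with \<open>0 \<le> z1 \<bullet> (Mm i1 A B d F x v Lam rho *v z1)\<close> show ?thesis by simp
    qed
    show ?thesis
    proof (intro exI conjI)
      show "(v, Lam, rho) \<in> cop_feasible i1 Uh A B d F x"
        unfolding feas_iff using rho0 cop Mm_sym by auto
      show "v + r * rho \<le> v + \<epsilon>" unfolding rho_def using r_pos by simp
    qed
  qed
  have LE: "cop_value i1 Uh A B d F r x \<le> pi_val A B d F U x"
  proof (rule dense_ge)
    fix e assume pe: "pi_val A B d F U x < e"
    show "cop_value i1 Uh A B d F r x \<le> e"
    proof (cases e)
      case (real t)
      show ?thesis unfolding real
      proof (rule ereal_le_epsilon2)
        fix \<epsilon> :: real assume "0 < \<epsilon>"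
        obtain lam Lam rho where f: "(lam, Lam, rho) \<in> cop_feasible i1 Uh A B d F x"
          and le: "lam + r * rho \<le> t + \<epsilon>"
          using main[of t \<epsilon>] less_imp_le[OF pe[unfolded real]] \<open>0 < \<epsilon>\<close> by blast
        have "cop_value i1 Uh A B d F r x \<le> ereal (lam + r * rho)"
          unfolding cop_value_def using f by (intro INF_lower2[OF f]) auto
        also have "\<dots> \<le> ereal t + ereal \<epsilon>" using le by simp
        finally show "cop_value i1 Uh A B d F r x \<le> ereal t + ereal \<epsilon>" .
      qed
    next
      case PInf then show ?thesis by simp
    next
      case MInf then show ?thesis using pe by simp
    qed
  qed
  show "cop_value i1 Uh A B d F r x = pi_val A B d F (Uset i1 Uh) x"
    using GE LE unfolding U_def by (rule antisym[rotated])
qed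

end
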